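(* Let $c:[0,\infty)\to\mathbb{R}$ be continuous and strictly increasing, and let $\lambda\mapsto\epsilon_\lambda\in(0,1]$ satisfy $\lim_{\lambda\to\infty}\epsilon_\lambda=\epsilon\in(0,1)$. For $\lambda>0$ let $\beta^F_\lambda$ be the optimal solution of $\min_{\beta\ge0}c(\beta)$ subject to $\tilde\alpha(\beta,\lambda)\le\epsilon_\lambda$, and let $\beta^G_\lambda$ be the optimal solution of $\min_{\beta\ge0}c(\beta)$ subject to $UB(\beta,\lambda)\le\epsilon_\lambda$. Then $\beta^G_\lambda\ge\beta^F_\lambda$ for all $\lambda>0$, and there is a finite $\beta^*$ with $\lim_{\lambda\to\infty}\beta^G_\lambda=\lim_{\lambda\to\infty}\beta^F_\lambda=\beta^*$.
   Context: $\phi,\Phi$ are the standard normal density and distribution function. For $\lambda>0$ and real $n\ge 0$, $\bar\alpha(n,\lambda)=\min\Big\{1,\big[\lambda\int_0^\infty t e^{-\lambda t}(1+t)^{n-1}\,dt\big]^{-1}\Big\}$ is the continuous Erlang-C function, and $\tilde\alpha(\beta,\lambda)=\bar\alpha(\lambda+\beta\sqrt\lambda,\lambda)$. For $\lambda>0,\beta\ge 0$ set $n=\lambda+\beta\sqrt{\lambda}$, $\rho=\lambda/n$, $a=\sqrt{-2n(1-\rho+\ln\rho)}$, $\gamma=(n-\lambda)/\sqrt{n}$, and $UB(\beta,\lambda)=\left[\rho+\gamma\left(\frac{\Phi(a)}{\phi(a)}+\frac{2}{3\sqrt{n}}\right)\right]^{-1}$. It is known (Janssen, van Leeuwaarden and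 Zwart) that $\tilde\alpha(\beta,\lambda)\le UB(\beta,\lambda)$ for all $\lambda,\beta>0$, and that $\lim_{\lambda\to\infty}UB(\beta,\lambda)=\alpha_{HW}(\beta):=\big(1+\sqrt{2\pi}\,\beta\,\Phi(\beta)e^{\beta^2/2}\big)^{-1}$ for each $\beta>0$. *)

theory Defs
  imports "HOL-Analysis.Analysis"
begin

definition std_phi :: "real \<Rightarrow> real" where
  "std_phi x = exp (- (x^2) / 2) / sqrt (2 * pi)"

definition std_Phi :: "real \<Rightarrow> real" where
  "std_Phi x = (LBINT t:{..x}. std_phi t)"

definition erlangC :: "real \<Rightarrow> real \<Rightarrow> real" where
  "erlangC n lam = min 1 (inverse (lam * (LBINT t:{0..}. t * exp (- lam * t) * (1 + t) powr (n - 1))))"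

definition alpha_tilde :: "real \<Rightarrow> real \<Rightarrow> real" where
  "alpha_tilde \<beta> lam = erlangC (lam + \<beta> * sqrt lam) lam"

definition UB :: "real \<Rightarrow> real \<Rightarrow> real" where
  "UB \<beta> lam =
    (let n = lam + \<beta> * sqrt lam;
         \<rho> = lam / n;
         a = sqrt (- 2 * n * (1 - \<rho> + ln \<rho>));
         \<gamma> = (n - lam) / sqrt n
     in inverse (\<rho> + \<gamma> * (std_Phi a / std_phi a + 2 / (3 * sqrt n))))"

end

theory Submission
  imports Defs "HOL-Probability.Probability"
begin



lemma phi_eq: "std_phi x = std_normal_density x"
  by (simp add: std_phi_def std_normal_density_def)

lemma phi_pos: "std_phi x > 0"
  by (simp add: std_phi_def)

lemma phi_cont: "continuous_on A std_phi"
  unfolding std_phi_def by (intro continuous_intros) auto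

lemma phi_isCont: "isCont std_phi x"
  unfolding std_phi_def by (intro continuous_intros) auto

lemma phi_meas[measurable]: "std_phi \<in> borel_measurable borel"
  unfolding std_phi_def by measurable

lemma phi_int: assumes "A \<in> sets borel" shows "set_integrable lborel A std_phi"
proof -
  have "integrable lborel std_phi"
    using integrable_normal_density[of 0 1] by (simp add: phi_eq[abs_def])
  then show ?thesis
    unfolding set_integrable_def
    by (rule integrable_mult_indicator[rotated]) (use assms in auto)
qed

lemma phi_total: "(\<integral>x. std_phi x \<partial>lborel) = 1"
  using integral_normal_density[of 0 1] by (simp add: phi_eq[abs_def])

lemma Phi_split: assumes "c \<le> u"
  shows "std_Phi u = std_Phi c + (LBINT t:{c<..u}. std_phi t)"
proof -
  have "{..u} = {..c} \<union> {c<..u}" using assms by auto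
  then have "std_Phi u = (LBINT t:{..c} \<union> {c<..u}. std_phi t)" by (simp add: std_Phi_def)
  also have "\<dots> = std_Phi c + (LBINT t:{c<..u}. std_phi t)"
    unfolding std_Phi_def by (rule set_integral_Un) (auto intro: phi_int)
  finally show ?thesis .
qed

lemma Phi_tail: "std_Phi x + (LBINT t:{x<..}. std_phi t) = 1"
proof -
  have "std_Phi x + (LBINT t:{x<..}. std_phi t) = (LBINT t:{..x} \<union> {x<..}. std_phi t)"
    unfolding std_Phi_def by (rule set_integral_Un[symmetric]) (auto intro: phi_int)
  also have "{..x} \<union> {x<..} = UNIV" by auto
  also have "(LBINT t:UNIV. std_phi t) = 1"
    using phi_total by (simp add: set_lebesgue_integral_def)
  finally show ?thesis .
qed

lemma Phi_refl: "(LBINT t:{x<..}. std_phi t) = std_Phi (-x)"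
proof -
  have "(LBINT t:{x<..}. std_phi t) = (LBINT t:{..<-x}. std_phi t)"
    unfolding set_lebesgue_integral_def
    by (subst lborel_integral_real_affine[where c="-1" and t=0])
       (auto intro!: Bochner_Integration.integral_cong split: split_indicator simp: std_phi_def)
  also have "\<dots> = std_Phi (-x)"
    unfolding std_Phi_def
    by (rule set_integral_cong_set) (auto intro!: AE_I[where N="{-x}"] simp: set_borel_measurable_def
        emeasure_insert_ne)
  finally show ?thesis .
qed

lemma Phi_sym: "std_Phi x + std_Phi (-x) = 1"
  using Phi_tail[of x] Phi_refl[of x] by simp

lemma phi_Ioc_Icc: "(LBINT t:{c<..u}. std_phi t) = (LBINT t:{c..u}. std_phi t)"
  by (rule set_integral_cong_set) (auto intro!: AE_I[where N="{c}"] simp: set_borel_measurable_def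
        emeasure_insert_ne)

lemma phi_Ioi_Ici: "(LBINT t:{c<..}. std_phi t) = (LBINT t:{c..}. std_phi t)"
  by (rule set_integral_cong_set) (auto intro!: AE_I[where N="{c}"] simp: set_borel_measurable_def
        emeasure_insert_ne)

lemma Phi_split_HK: assumes "c \<le> u"
  shows "std_Phi u = std_Phi c + integral {c..u} std_phi"
  using Phi_split[OF assms] phi_Ioc_Icc set_borel_integral_eq_integral(2)[OF phi_int[of "{c..u}"]]
  by simp

lemma Phi_deriv: "(std_Phi has_real_derivative std_phi x) (at x)"
proof -
  have "((\<lambda>u. std_Phi (x-1) + integral {x-1..u} std_phi) has_real_derivative std_phi x) (at x within {x-1..x+1})"
  proof -
    have "((\<lambda>u. integral {x-1..u} std_phi) has_real_derivative std_phi x) (at x within {x-1..x+1})"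
      by (rule integral_has_real_derivative) (auto intro: phi_cont)
    then show ?thesis by (intro derivative_eq_intros) auto
  qed
  then have "(std_Phi has_real_derivative std_phi x) (at x within {x-1..x+1})"
    by (rule has_field_derivative_transform_within[where d=1]) (auto simp: Phi_split_HK)
  then show ?thesis by (simp add: at_within_Icc_at)
qed

lemma Phi_isCont: "isCont std_Phi x"
  using Phi_deriv DERIV_isCont by blast

lemma Phi_cont: "continuous_on A std_Phi"
  using Phi_isCont continuous_at_imp_continuous_on by blast

lemma Phi_mono: "x \<le> y \<Longrightarrow> std_Phi x \<le> std_Phi y"
  by (rule DERIV_nonneg_imp_nondecreasing[where f=std_Phi]) (use Phi_deriv phi_pos less_imp_le in blast)+

lemma Phi_0: "std_Phi 0 = 1/2"
  using Phi_sym[of 0] by simp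

lemma Phi_lim: "(std_Phi \<longlongrightarrow> 1) at_top"
proof -
  have "((\<lambda>b. LBINT t:{0..b}. std_phi t) \<longlongrightarrow> (LBINT t:{0..}. std_phi t)) at_top"
    by (intro tendsto_set_lebesgue_integral_at_top phi_int) auto
  then have "((\<lambda>b. std_Phi 0 + (LBINT t:{0..b}. std_phi t)) \<longlongrightarrow> std_Phi 0 + (LBINT t:{0..}. std_phi t)) at_top"
    by (intro tendsto_intros)
  moreover have "std_Phi 0 + (LBINT t:{0..}. std_phi t) = 1"
    using Phi_tail[of 0] phi_Ioi_Ici[of 0] by simp
  ultimately have "((\<lambda>b. std_Phi 0 + (LBINT t:{0..b}. std_phi t)) \<longlongrightarrow> 1) at_top" by simp
  then show ?thesis
    by (rule Lim_transform_eventually)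
       (auto simp: eventually_at_top_linorder Phi_split phi_Ioc_Icc intro!: exI[of _ 0])
qed




definition psi :: "real \<Rightarrow> real" where "psi u = u - 1 - ln u"
definition W :: "real \<Rightarrow> real" where
  "W u = (if 1 \<le> u then sqrt (2 * psi u) else - sqrt (2 * psi u))"

lemma psi_deriv: "u > 0 \<Longrightarrow> (psi has_real_derivative (1 - 1/u)) (at u)"
  unfolding psi_def by (auto intro!: derivative_eq_intros)

definition kfun :: "real \<Rightarrow> real" where
  "kfun u = psi u - 9/2 * (u-1)^2 / (u+2)^2"

lemma kfun_deriv: assumes "u > 0"
  shows "(kfun has_real_derivative ((u-1)^3*(u+8)/(u*(u+2)^3))) (at u)"
proof -
  have "(kfun has_real_derivative (1 - 1/u) - 9/2 * ((2*(u-1)*(u+2)^2 - (u-1)^2 * (2*(u+2))) / ((u+2)^2)^2)) (at u)"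
    unfolding kfun_def psi_def using assms
    apply (auto intro!: derivative_eq_intros)
    apply (simp add: field_simps power2_eq_square)
    done
  moreover have "(1 - 1/u) - 9/2 * ((2*(u-1)*(u+2)^2 - (u-1)^2 * (2*(u+2))) / ((u+2)^2)^2)
      = (u-1)^3*(u+8)/(u*(u+2)^3)"
  proof -
    have p: "u+2 > 0" using assms by simp
    have e1: "9/2 * ((2*(u-1)*(u+2)^2 - (u-1)^2 * (2*(u+2))) / ((u+2)^2)^2) = 27*(u-1)/(u+2)^3"
    proof -
      have "2*(u-1)*(u+2)^2 - (u-1)^2 * (2*(u+2)) = 6*(u-1)*(u+2)" by algebra
      moreover have "((u+2)^2)^2 = (u+2)^3 * (u+2)" by algebra
      moreover have gen: "\<And>a X Y::real. X \<noteq> 0 \<Longrightarrow> Y \<noteq> 0 \<Longrightarrow> 9/2*(6*a*Y/(X*Y)) = 27*a/X"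
        by (simp add: field_simps)
      ultimately show ?thesis using p gen[of "(u+2)^3" "u+2" "u-1"] by (simp only: mult.assoc) simp
    qed
    have e2: "(u+2)^3 - 27*u = (u-1)^2*(u+8)" by algebra
    have "(1 - 1/u) - 27*(u-1)/(u+2)^3 = (u-1)*((u+2)^3 - 27*u)/(u*(u+2)^3)"
      using p assms by (simp add: field_simps)
    then show ?thesis using e1 e2 by (simp add: power3_eq_cube power2_eq_square mult.assoc)
  qed
  ultimately show ?thesis by simp
qed

lemma kfun_nonneg: assumes "u > 0" shows "kfun u \<ge> 0"
proof (cases "u \<ge> 1")
  case True
  have "kfun 1 \<le> kfun u"
  proof (rule DERIV_nonneg_imp_nondecreasing[OF True])
    fix x assume "1 \<le> x" "x \<le> u"
    then have "(kfun has_real_derivative ((x-1)^3*(x+8)/(x*(x+2)^3))) (at x)"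
      by (intro kfun_deriv) auto
    moreover have "0 \<le> (x-1)^3*(x+8)/(x*(x+2)^3)" using \<open>1 \<le> x\<close> by auto
    ultimately show "\<exists>y. (kfun has_real_derivative y) (at x) \<and> 0 \<le> y" by blast
  qed
  then show ?thesis by (simp add: kfun_def psi_def)
next
  case False
  have "kfun 1 \<le> kfun u"
  proof (rule DERIV_nonpos_imp_nonincreasing[of u 1])
    show "u \<le> 1" using False by simp
  next
    fix x assume "u \<le> x" "x \<le> 1"
    then have "(x-1)^3 \<le> 0" by (simp add: power3_eq_cube mult_nonneg_nonpos mult_nonpos_nonpos)
    then have "(x-1)^3*(x+8)/(x*(x+2)^3) \<le> 0" using \<open>u \<le> x\<close> assms
      by (intro divide_nonpos_pos mult_nonpos_nonneg) auto
    then show "\<exists>y. (kfun has_real_derivative y) (at x) \<and> y \<le> 0"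
      using \<open>u \<le> x\<close> assms kfun_deriv[of x] by auto
  qed
  then show ?thesis by (simp add: kfun_def psi_def)
qed

lemma psi_lower: "u > 0 \<Longrightarrow> 9/2 * (u-1)^2 / (u+2)^2 \<le> psi u"
  using kfun_nonneg[of u] by (simp add: kfun_def)

lemma psi_pos: assumes "u > 0" "u \<noteq> 1" shows "psi u > 0"
proof -
  have "0 < 9/2 * (u-1)^2 / (u+2)^2" using assms by auto
  then show ?thesis using psi_lower[OF assms(1)] by linarith
qed

lemma psi_nonneg: "u > 0 \<Longrightarrow> psi u \<ge> 0"
  using psi_pos[of u] by (cases "u = 1") (auto simp: psi_def)

lemma psi_upper1: assumes "u \<ge> 1" shows "2 * psi u \<le> (u-1)^2"
proof -
  define f where "f x = (x-1)^2/2 - psi x" for x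
  have "f 1 \<le> f u"
  proof (rule DERIV_nonneg_imp_nondecreasing[OF assms])
    fix x assume x: "1 \<le> x" "x \<le> u"
    have "(f has_real_derivative (x-1) - (1 - 1/x)) (at x)"
      unfolding f_def psi_def using x by (auto intro!: derivative_eq_intros simp: field_simps)
    moreover have "(x-1) - (1 - 1/x) = (x-1)^2/x" using x by (simp add: field_simps power2_eq_square)
    ultimately show "\<exists>y. (f has_real_derivative y) (at x) \<and> 0 \<le> y" using x by auto
  qed
  then show ?thesis by (simp add: f_def psi_def)
qed

lemma psi_upper2: assumes "0 < u" "u \<le> 1" shows "2 * u^2 * psi u \<le> (1-u)^2"
proof -
  define f where "f x = (1/x-1)^2/2 - psi x" for x
  have "f 1 \<le> f u"
  proof (rule DERIV_nonpos_imp_nonincreasing[OF assms(2)])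
    fix x assume x: "u \<le> x" "x \<le> 1"
    have "(f has_real_derivative (1/x-1)*(-1/x^2) - (1 - 1/x)) (at x)"
      unfolding f_def psi_def using x assms by (auto intro!: derivative_eq_intros simp: power2_eq_square field_simps)
    moreover have "(1/x-1)*(-1/x^2) - (1 - 1/x) = -((1/x-1)^2*(1/x+1))"
      using x assms by (simp add: field_simps power2_eq_square)
    moreover have "(1/x-1)^2*(1/x+1) \<ge> 0" using x assms by auto
    ultimately show "\<exists>y. (f has_real_derivative y) (at x) \<and> y \<le> 0" by auto
  qed
  then have "psi u \<le> (1/u-1)^2/2" by (simp add: f_def psi_def)
  also have "(1/u-1)^2/2 = (1-u)^2/(2*u^2)" using assms by (simp add: field_simps power2_eq_square)
  finally show ?thesis using assms by (simp add: field_simps)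
qed

lemma absW: "u > 0 \<Longrightarrow> \<bar>W u\<bar> = sqrt (2 * psi u)"
  using psi_nonneg[of u] by (simp add: W_def)

lemma W_sq: "u > 0 \<Longrightarrow> (W u)^2 = 2 * psi u"
  using psi_nonneg[of u] by (simp add: W_def)

lemma W_1: "W 1 = 0" by (simp add: W_def psi_def)

lemma W_pos: "u > 1 \<Longrightarrow> W u > 0"
  using psi_pos[of u] by (simp add: W_def)

lemma W_neg: "0 < u \<Longrightarrow> u < 1 \<Longrightarrow> W u < 0"
  using psi_pos[of u] by (simp add: W_def)

lemma W_nonneg: "u \<ge> 1 \<Longrightarrow> W u \<ge> 0"
  using psi_nonneg[of u] by (simp add: W_def)

lemma psi_0_iff: "psi 1 = 0" by (simp add: psi_def)

lemma W_deriv: assumes "u > 0" "u \<noteq> 1"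
  shows "(W has_real_derivative ((1 - 1/u) / W u)) (at u)"
proof (cases "u > 1")
  case True
  have ps: "psi u > 0" using psi_pos assms by auto
  have "((\<lambda>x. sqrt (2 * psi x)) has_real_derivative (inverse (sqrt (2 * psi u)) / 2 * (2 * (1 - 1/u)))) (at u)"
    using ps assms by (auto intro!: derivative_eq_intros psi_deriv)
  moreover have e: "inverse (sqrt (2 * psi u)) / 2 * (2 * (1 - 1/u)) = (1 - 1/u) / W u"
    using True ps by (simp add: W_def divide_simps)
  ultimately have "((\<lambda>x. sqrt (2 * psi x)) has_real_derivative ((1 - 1/u) / W u)) (at u)" by (simp only:)
  then show ?thesis
    by (rule has_field_derivative_transform_within_open[where S="{1<..}"]) (use True in \<open>auto simp: W_def\<close>)
next
  case False
  then have u1: "u < 1" using assms by auto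
  have ps: "psi u > 0" using psi_pos assms by auto
  have "((\<lambda>x. - sqrt (2 * psi x)) has_real_derivative - (inverse (sqrt (2 * psi u)) / 2 * (2 * (1 - 1/u)))) (at u)"
    using ps assms by (auto intro!: derivative_eq_intros psi_deriv)
  moreover have "- (inverse (sqrt (2 * psi u)) / 2 * (2 * (1 - 1/u))) = (1 - 1/u) / W u"
    using u1 ps by (simp add: W_def divide_simps)
  ultimately have "((\<lambda>x. - sqrt (2 * psi x)) has_real_derivative ((1 - 1/u) / W u)) (at u)" by (simp only:)
  then show ?thesis
    by (rule has_field_derivative_transform_within_open[where S="{..<1}"]) (use u1 in \<open>auto simp: W_def\<close>)
qed

lemma psi_cont: "continuous_on {0<..} psi"
  unfolding psi_def by (intro continuous_intros) auto

lemma psi_isCont: "u > 0 \<Longrightarrow> isCont psi u"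
  using DERIV_isCont psi_deriv by blast


lemma W_isCont: assumes "u > 0" shows "isCont W u"
proof (cases "u = 1")
  case False
  then show ?thesis using W_deriv[OF assms False] DERIV_isCont by blast
next
  case True
  have "((\<lambda>x. sqrt (2 * psi x)) \<longlongrightarrow> sqrt (2 * psi 1)) (at 1)"
    using psi_isCont[of 1] by (intro tendsto_intros) (auto simp: isCont_def)
  then have "((\<lambda>x. sqrt (2 * psi x)) \<longlongrightarrow> 0) (at 1)" by (simp add: psi_def)
  moreover have "eventually (\<lambda>x. sqrt (2 * psi x) = \<bar>W x\<bar>) (at 1)"
  proof -
    have "eventually (\<lambda>x. x \<in> {0<..}) (at (1::real))" by (rule eventually_at_in_open') auto
    then show ?thesis by eventually_elim (simp add: absW)
  qed
  ultimately have "((\<lambda>x. \<bar>W x\<bar>) \<longlongrightarrow> 0) (at 1)" by (rule Lim_transform_eventually)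
  then have "(W \<longlongrightarrow> 0) (at 1)" by (simp add: tendsto_rabs_zero_iff)
  then show ?thesis using True by (simp add: isCont_def W_1)
qed

lemma W_absbound_low: assumes "u > 0" shows "3 * \<bar>u - 1\<bar> / (u+2) \<le> \<bar>W u\<bar>"
proof -
  have e: "(3 * \<bar>u - 1\<bar> / (u+2))^2 = 2 * (9/2 * (u-1)^2 / (u+2)^2)"
    by (simp add: power_divide power_mult_distrib)
  have "2 * (9/2 * (u-1)^2 / (u+2)^2) \<le> 2 * psi u" using psi_lower[OF assms] by linarith
  also have "2 * psi u = (\<bar>W u\<bar>)^2" using W_sq[OF assms] by simp
  finally have "(3 * \<bar>u - 1\<bar> / (u+2))^2 \<le> (\<bar>W u\<bar>)^2" using e by simp
  then show ?thesis by (rule power2_le_imp_le) simp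
qed


lemma W_quot: assumes "u > 0" "u \<noteq> 1"
  shows "(1 - 1/u) / W u = \<bar>u - 1\<bar> / (u * \<bar>W u\<bar>)"
proof (cases "u > 1")
  case True
  then have "W u > 0" by (rule W_pos)
  then show ?thesis using True by (simp add: field_simps)
next
  case False
  then have u1: "u < 1" using assms by simp
  then have "W u < 0" using assms W_neg by simp
  then show ?thesis using u1 assms by (simp add: field_simps)
qed

lemma W_ineqL: assumes "u > 0" "u \<noteq> 1"
  shows "(1 - 1/u) / W u + 2/3 * (1 - 1/u) \<le> 1"
proof -
  have b: "3 * \<bar>u - 1\<bar> / (u+2) \<le> \<bar>W u\<bar>" by (rule W_absbound_low[OF assms(1)])
  have p: "0 < 3 * \<bar>u - 1\<bar> / (u+2)" using assms by simp
  have "\<bar>W u\<bar> > 0" using b p by linarith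
  then have "\<bar>u - 1\<bar> / (u * \<bar>W u\<bar>) \<le> \<bar>u - 1\<bar> / (u * (3 * \<bar>u - 1\<bar> / (u+2)))"
    using assms b p by (intro divide_left_mono mult_left_mono mult_pos_pos) auto
  also have "\<dots> = (u+2) / (3*u)" using assms by (simp add: field_simps)
  finally have "(1 - 1/u) / W u \<le> (u+2) / (3*u)" using W_quot[OF assms] by simp
  moreover have "(u+2) / (3*u) + 2/3 * (1 - 1/u) = 1" using assms by (simp add: field_simps)
  ultimately show ?thesis by linarith
qed

lemma W_ineqU1: assumes "u > 1"
  shows "(1 - 1/u) / W u * (1 + W u) \<ge> 1"
proof -
  have Wp: "W u > 0" using W_pos assms by auto
  have sq: "(W u)^2 = 2 * psi u" by (rule W_sq) (use assms in simp)
  have "2 * psi u \<le> (u-1)^2" by (rule psi_upper1) (use assms in simp)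
  then have "(W u)^2 \<le> (u-1)^2" using sq by simp
  then have le: "W u \<le> u - 1" by (rule power2_le_imp_le) (use assms in simp)
  have eq: "(1-1/u)/W u*(1+W u) = (u-1)*(1+W u)/(u*W u)" using assms Wp by (simp add: field_simps)
  have pos: "u * W u > 0" using assms Wp by simp
  have "u * W u \<le> (u-1)*(1+W u)" using le by (simp add: algebra_simps)
  then show ?thesis unfolding eq using pos by (simp add: le_divide_eq)
qed

lemma W_ineqU2: assumes "0 < u" "u < 1"
  shows "(1 - 1/u) / W u \<ge> 1"
proof -
  have Wn: "W u < 0" using W_neg assms by auto
  have sq: "(W u)^2 = 2 * psi u" by (rule W_sq) (use assms in simp)
  have "2 * u^2 * psi u \<le> (1-u)^2" by (rule psi_upper2) (use assms in simp_all)
  moreover have "(u * (- W u))^2 = u^2 * (2 * psi u)" using sq by (simp add: power_mult_distrib)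
  ultimately have "(u * (- W u))^2 \<le> (1-u)^2" by simp
  then have le: "u * (- W u) \<le> 1 - u" by (rule power2_le_imp_le) (use assms in simp)
  have eq: "(1 - 1/u) / W u = (1 - u) / (u * (- W u))" using assms Wn by (simp add: field_simps)
  have pos: "u * (- W u) > 0" using Wn assms by (intro mult_pos_pos) simp_all
  have "1 \<le> (1 - u) / (u * (- W u))" using le_divide_eq_1_pos[OF pos] le by blast
  then show ?thesis unfolding eq .
qed

lemma psi_at_top: "filterlim psi at_top at_top"
  unfolding psi_def by real_asymp

lemma W_at_top: "filterlim W at_top at_top"
proof -
  have "filterlim (\<lambda>u. sqrt (2 * psi u)) at_top at_top"
    by (rule filterlim_compose[OF sqrt_at_top])
       (rule filterlim_tendsto_pos_mult_at_top[OF tendsto_const _ psi_at_top], simp)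
  moreover have "eventually (\<lambda>u. sqrt (2 * psi u) = W u) at_top"
    by (auto simp: W_def eventually_at_top_linorder intro!: exI[of _ 1])
  ultimately show ?thesis using filterlim_cong[OF refl refl, of "\<lambda>u. sqrt (2 * psi u)" W at_top at_top] by blast
qed




lemma mono_pieces:
  fixes f :: "real \<Rightarrow> real"
  assumes "a \<le> b" "continuous_on {a..b} f"
    and "\<And>x. a < x \<Longrightarrow> x < b \<Longrightarrow> x \<noteq> c \<Longrightarrow> \<exists>y. DERIV f x :> y \<and> y \<ge> 0"
  shows "f a \<le> f b"
proof (cases "a < c \<and> c < b")
  case True
  have "f a \<le> f c"
    by (rule DERIV_nonneg_imp_increasing_open) (use True assms in \<open>auto intro: continuous_on_subset\<close>)
  also have "f c \<le> f b"
    by (rule DERIV_nonneg_imp_increasing_open) (use True assms in \<open>auto intro: continuous_on_subset\<close>)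
  finally show ?thesis .
next
  case False
  show ?thesis
    by (rule DERIV_nonneg_imp_increasing_open) (use False assms in \<open>auto\<close>)
qed

lemma int_deriv:
  fixes g :: "real \<Rightarrow> real"
  assumes "continuous_on {0..} g" "0 \<le> x" "x \<le> T"
  shows "((\<lambda>s. integral {0..s} g) has_real_derivative g x) (at x within {0..T})"
  by (rule integral_has_real_derivative) (use assms in \<open>auto intro: continuous_on_subset\<close>)

lemma ftc_finite:
  fixes g F :: "real \<Rightarrow> real"
  assumes cg: "continuous_on {0..} g" and cF: "continuous_on {0..} F"
    and dF: "\<And>t. t > 0 \<Longrightarrow> t \<noteq> c \<Longrightarrow> \<exists>d. (F has_real_derivative d) (at t) \<and> d \<le> g t"
    and T: "T \<ge> 0"
  shows "F T - F 0 \<le> integral {0..T} g"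
proof -
  define D where "D s = integral {0..s} g - F s" for s
  have "D 0 \<le> D T"
  proof (rule mono_pieces[where c=c and f=D and a=0 and b=T])
    show "0 \<le> T" by fact
    have "continuous_on {0..T} (\<lambda>s. integral {0..s} g)"
    proof -
      have "\<And>x. x \<in> {0..T} \<Longrightarrow> continuous (at x within {0..T}) (\<lambda>s. integral {0..s} g)"
        using int_deriv[OF cg] by (auto intro: DERIV_continuous)
      then show ?thesis by (simp add: continuous_on_eq_continuous_within)
    qed
    then show "continuous_on {0..T} D" unfolding D_def
      by (intro continuous_intros) (use cF in \<open>auto intro: continuous_on_subset\<close>)
    fix x assume x: "0 < x" "x < T" "x \<noteq> c"
    obtain d where d: "(F has_real_derivative d) (at x)" "d \<le> g x" using dF x by blast
    have "((\<lambda>s. integral {0..s} g) has_real_derivative g x) (at x)"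
      using int_deriv[OF cg, of x T] x by (simp add: at_within_Icc_at)
    then have "(D has_real_derivative g x - d) (at x)" unfolding D_def
      using d(1) by (rule DERIV_diff)
    then show "\<exists>y. (D has_real_derivative y) (at x) \<and> 0 \<le> y" using d(2) by auto
  qed
  then show ?thesis by (simp add: D_def)
qed

lemma ftc_ge:
  fixes g F :: "real \<Rightarrow> real"
  assumes cg: "continuous_on {0..} g" and ig: "set_integrable lborel {0..} g"
    and cF: "continuous_on {0..} F"
    and dF: "\<And>t. t > 0 \<Longrightarrow> t \<noteq> c \<Longrightarrow> \<exists>d. (F has_real_derivative d) (at t) \<and> d \<le> g t"
    and lim: "(F \<longlongrightarrow> L) at_top"
  shows "L - F 0 \<le> (LBINT t:{0..}. g t)"
proof -
  have l1: "((\<lambda>T. LBINT t:{0..T}. g t) \<longlongrightarrow> (LBINT t:{0..}. g t)) at_top"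
    by (intro tendsto_set_lebesgue_integral_at_top ig) auto
  have l2: "((\<lambda>T. F T - F 0) \<longlongrightarrow> L - F 0) at_top" by (intro tendsto_intros lim)
  have ev: "eventually (\<lambda>T. F T - F 0 \<le> (LBINT t:{0..T}. g t)) at_top"
  proof (rule eventually_mono[OF eventually_ge_at_top[of 0]])
    fix T :: real assume T: "0 \<le> T"
    have "(LBINT t:{0..T}. g t) = integral {0..T} g"
      by (rule set_borel_integral_eq_integral(2), rule borel_integrable_atLeastAtMost')
         (use cg in \<open>auto intro: continuous_on_subset\<close>)
    then show "F T - F 0 \<le> (LBINT t:{0..T}. g t)" using ftc_finite[OF cg cF dF T] by simp
  qed
  show ?thesis by (rule tendsto_le[OF _ l1 l2 ev]) simp
qed

lemma ftc_le:
  fixes g F :: "real \<Rightarrow> real"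
  assumes cg: "continuous_on {0..} g" and ig: "set_integrable lborel {0..} g"
    and cF: "continuous_on {0..} F"
    and dF: "\<And>t. t > 0 \<Longrightarrow> t \<noteq> c \<Longrightarrow> \<exists>d. (F has_real_derivative d) (at t) \<and> d \<ge> g t"
    and lim: "(F \<longlongrightarrow> L) at_top"
  shows "(LBINT t:{0..}. g t) \<le> L - F 0"
proof -
  have "(-L) - (- F 0) \<le> (LBINT t:{0..}. - g t)"
  proof (rule ftc_ge[where F="\<lambda>t. - F t" and c=c])
    show "continuous_on {0..} (\<lambda>t. - g t)" using cg by (intro continuous_intros)
    show "set_integrable lborel {0..} (\<lambda>t. - g t)" using integrable_minus[OF ig[unfolded set_integrable_def]] by (simp add: set_integrable_def)
    show "continuous_on {0..} (\<lambda>t. - F t)" using cF by (intro continuous_intros)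
    show "((\<lambda>t. - F t) \<longlongrightarrow> - L) at_top" using lim by (intro tendsto_intros)
    fix t :: real assume "t > 0" "t \<noteq> c"
    then obtain d where "(F has_real_derivative d) (at t)" "d \<ge> g t" using dF by blast
    then show "\<exists>d. ((\<lambda>t. - F t) has_real_derivative d) (at t) \<and> d \<le> - g t"
      by (intro exI[of _ "-d"]) (auto intro!: derivative_eq_intros)
  qed
  moreover have "(LBINT t:{0..}. - g t) = - (LBINT t:{0..}. g t)" by (rule set_integral_uminus[OF ig])
  ultimately show ?thesis by simp
qed

definition gI :: "real \<Rightarrow> real \<Rightarrow> real \<Rightarrow> real" where
  "gI n lam t = t * exp (- lam * t) * (1 + t) powr (n - 1)"

lemma gI_meas[measurable]: "gI n lam \<in> borel_measurable borel"
  unfolding gI_def by measurable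

lemma gI_nonneg: "t \<ge> 0 \<Longrightarrow> gI n lam t \<ge> 0"
  unfolding gI_def by simp

lemma gI_cont: "continuous_on {0..} (gI n lam)"
  unfolding gI_def by (intro continuous_intros) auto

lemma gI_bound:
  assumes lam: "lam > 0" and n: "n \<ge> lam" and x: "x \<ge> 0"
  shows "gI n lam x \<le> exp (n * ln (2*n/lam) + lam/2 - n) * exp (- (x * (lam/2)))"
proof -
  define c where "c = 2*n/lam"
  have c: "c > 0" using lam n by (simp add: c_def)
  have p: "1 + x > 0" using x by simp
  have "x * (1+x) powr (n-1) \<le> (1+x) * (1+x) powr (n-1)" using x by (intro mult_right_mono) auto
  also have "\<dots> = (1+x) powr n"
    using p powr_add[of "1+x" 1 "n-1"] by simp
  also have "\<dots> = exp (n * ln (1+x))" using p by (simp add: powr_def)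
  also have "\<dots> \<le> exp (n * ln c + lam*(1+x)/2 - n)"
  proof -
    have "ln ((1+x)/c) \<le> (1+x)/c - 1" using p c by (intro ln_le_minus_one) simp
    then have "ln (1+x) \<le> ln c + (1+x)/c - 1" using p c by (simp add: ln_div)
    then have "n * ln (1+x) \<le> n * (ln c + (1+x)/c - 1)" using n lam by (intro mult_left_mono) auto
    also have "n * (ln c + (1+x)/c - 1) = n * ln c + lam*(1+x)/2 - n"
      using lam n by (simp add: c_def field_simps)
    finally show ?thesis by simp
  qed
  finally have h: "x * (1+x) powr (n-1) \<le> exp (n * ln c + lam*(1+x)/2 - n)" .
  have "gI n lam x = exp (- lam * x) * (x * (1+x) powr (n-1))" by (simp add: gI_def mult_ac)
  also have "\<dots> \<le> exp (- lam * x) * exp (n * ln c + lam*(1+x)/2 - n)"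
    by (intro mult_left_mono h) simp
  also have "\<dots> = exp (n * ln c + lam/2 - n) * exp (- (x * (lam/2)))"
    unfolding exp_add[symmetric] by (rule arg_cong[where f=exp]) (simp add: field_simps)
  finally show ?thesis by (simp add: c_def)
qed

lemma gI_int:
  assumes lam: "lam > 0" and n: "n \<ge> lam"
  shows "set_integrable lborel {0..} (gI n lam)"
proof -
  have "set_integrable lborel {0<..} (\<lambda>x. exp (- (x * (lam/2))))"
    by (rule integrable_I0i_exp_mscale) (use lam in simp)
  then have e: "set_integrable lborel {0..} (\<lambda>x. exp (- (x * (lam/2))))"
    by (subst set_integrable_discrete_difference[where X="{0}"]) auto
  define M where "M = exp (n * ln (2*n/lam) + lam/2 - n)"
  have e2: "set_integrable lborel {0..} (\<lambda>x. M * exp (- (x * (lam/2))))"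
    using e by (rule set_integrable_mult_right)
  show ?thesis
  proof (rule set_integrable_bound[OF e2])
    show "set_borel_measurable lborel {0..} (gI n lam)"
      unfolding set_borel_measurable_def by measurable
    show "AE x in lborel. x \<in> {0..} \<longrightarrow> norm (gI n lam x) \<le> norm (M * exp (- (x * (lam/2))))"
    proof (rule AE_I2, rule impI)
      fix x :: real assume "x \<in> {0..}"
      then have x: "x \<ge> 0" by simp
      have "norm (gI n lam x) = gI n lam x" using gI_nonneg[OF x] by simp
      also have "\<dots> \<le> M * exp (- (x * (lam/2)))" using gI_bound[OF lam n x] by (simp add: M_def)
      also have "\<dots> = norm (M * exp (- (x * (lam/2))))" by (simp add: M_def)
      finally show "norm (gI n lam x) \<le> norm (M * exp (- (x * (lam/2))))" .
    qed
  qed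
qed




context
  fixes lam n :: real
  assumes lam: "lam > 0" and n: "n \<ge> lam"
begin

definition "rho = lam / n"
definition "KK = n * psi rho"
definition "uu t = rho * (1 + t)"
definition "EE t = exp (KK - n * psi (uu t))"
definition "XX t = exp (- n * psi (uu t))"
definition "PP t = std_Phi (sqrt n * W (uu t))"
definition "YY t = exp (- n * psi (max (uu t) 1))"
definition "CC = (1 - rho) * sqrt n * exp KK"
definition "FL t = - rho * EE t + CC * (sqrt (2*pi) * PP t - 2 / (3 * sqrt n) * XX t)"
definition "FU t = - rho * EE t + CC * (sqrt (2*pi) * PP t + (1 / sqrt n) * (1 - YY t))"

lemma n_pos: "n > 0" using lam n by simp
lemma rho_pos: "rho > 0" using lam n by (simp add: rho_def)
lemma rho_le1: "rho \<le> 1" using lam n by (simp add: rho_def)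
lemma lam_eq: "lam = n * rho" using n_pos by (simp add: rho_def)
lemma lam_eq': "n * rho = lam" using n_pos by (simp add: rho_def)
lemma uu_pos: "t \<ge> 0 \<Longrightarrow> uu t > 0" using rho_pos by (simp add: uu_def)
lemma uu_pos': "t > -1 \<Longrightarrow> uu t > 0" using rho_pos by (simp add: uu_def)

lemma gI_eq: assumes t: "t \<ge> 0"
  shows "lam * gI n lam t = n * rho * EE t * (1 - rho / uu t)"
proof -
  have p: "1 + t > 0" using t by simp
  have "EE t = exp (- lam * t) * (1+t) powr n"
  proof -
    have "KK - n * psi (uu t) = - lam * t + n * ln (1+t)"
    proof -
      have l: "ln (rho * (1+t)) = ln rho + ln (1+t)" using rho_pos p by (simp add: ln_mult)
      have "KK - n * psi (uu t) = n * (- rho * t + ln (1+t))"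
        unfolding KK_def psi_def uu_def l by (simp add: algebra_simps)
      also have "\<dots> = - (n * rho) * t + n * ln (1+t)" by (simp add: algebra_simps)
      also have "\<dots> = - lam * t + n * ln (1+t)" by (simp only: lam_eq')
      finally show ?thesis .
    qed
    then have "EE t = exp (- lam * t + n * ln (1+t))" by (simp add: EE_def)
    also have "\<dots> = exp (- lam * t) * exp (n * ln (1+t))" by (rule exp_add)
    finally show ?thesis using p by (simp add: powr_def)
  qed
  moreover have "(1+t) powr (n-1) = (1+t) powr n / (1+t)" using p by (simp add: powr_diff)
  moreover have "1 - rho / uu t = t / (1+t)"
  proof -
    have "uu t \<noteq> 0" using uu_pos[OF t] by simp
    then show ?thesis using rho_pos p by (simp add: uu_def field_simps)
  qed
  ultimately show ?thesis using p unfolding gI_def lam_eq[symmetric] by simp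
qed

lemma uu_deriv: "(uu has_real_derivative rho) (at t)"
  unfolding uu_def by (auto intro!: derivative_eq_intros)

lemma psiu_deriv: assumes "t > -1"
  shows "((\<lambda>t. psi (uu t)) has_real_derivative (1 - 1/uu t) * rho) (at t)"
  by (rule DERIV_chain2[OF psi_deriv uu_deriv]) (rule uu_pos'[OF assms])

lemma EE_deriv: assumes "t > -1"
  shows "(EE has_real_derivative EE t * (- (n * ((1 - 1/uu t) * rho)))) (at t)"
  unfolding EE_def
  by (rule DERIV_fun_exp, rule DERIV_diff[where D=0, OF DERIV_const, simplified], rule DERIV_cmult, rule psiu_deriv[OF assms])

lemma XX_deriv: assumes "t > -1"
  shows "(XX has_real_derivative XX t * (- (n * ((1 - 1/uu t) * rho)))) (at t)"
proof -
  have "((\<lambda>t. - n * psi (uu t)) has_real_derivative - n * ((1 - 1/uu t) * rho)) (at t)"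
    by (rule DERIV_cmult, rule psiu_deriv[OF assms])
  then show ?thesis unfolding XX_def by (drule_tac DERIV_fun_exp) simp
qed

lemma PP_deriv: assumes "t > -1" "uu t \<noteq> 1"
  shows "(PP has_real_derivative std_phi (sqrt n * W (uu t)) * (sqrt n * ((1 - 1/uu t) / W (uu t) * rho))) (at t)"
proof -
  have "((\<lambda>t. W (uu t)) has_real_derivative (1 - 1/uu t) / W (uu t) * rho) (at t)"
    by (rule DERIV_chain2[OF W_deriv uu_deriv]) (use uu_pos'[OF assms(1)] assms(2) in auto)
  then have "((\<lambda>t. sqrt n * W (uu t)) has_real_derivative sqrt n * ((1 - 1/uu t) / W (uu t) * rho)) (at t)"
    by (rule DERIV_cmult)
  then show ?thesis unfolding PP_def by (rule DERIV_chain2[OF Phi_deriv])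
qed

lemma phiW: assumes "t > -1" shows "std_phi (sqrt n * W (uu t)) = XX t / sqrt (2*pi)"
proof -
  have "(sqrt n * W (uu t))^2 = n * (2 * psi (uu t))"
    using W_sq[OF uu_pos'[OF assms]] n_pos by (simp add: power_mult_distrib)
  then show ?thesis by (simp add: std_phi_def XX_def)
qed

lemma EE_XX: "EE t = exp KK * XX t"
  by (simp add: EE_def XX_def exp_add[symmetric])

lemma algL:
  fixes rr ss tt kk ee xx qq vv :: real
  assumes "ss > 0" "tt > 0" "ee = kk * xx"
  shows "- rr * (ee * (- (ss * ss * (vv * rr)))) + (1-rr) * ss * kk * (tt * ((xx/tt) * (ss * (qq * rr))) - 2/(3 * ss) * (xx * (- (ss * ss * (vv * rr)))))
         = ss * ss * rr * ee * (rr * vv + (1-rr) * (qq + 2/3 * vv))"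
  using assms by (simp add: field_simps)

lemma algU1:
  fixes rr ss tt kk ee xx qq vv :: real
  assumes "ss > 0" "tt > 0" "ee = kk * xx"
  shows "- rr * (ee * (- (ss * ss * (vv * rr)))) + (1-rr) * ss * kk * (tt * ((xx/tt) * (ss * (qq * rr))) + 1/ss * (0 - xx * (- (ss * ss * (vv * rr)))))
         = ss * ss * rr * ee * (rr * vv + (1-rr) * (qq + vv))"
  using assms by (simp add: field_simps)

lemma algU2:
  fixes rr ss tt kk ee xx qq vv :: real
  assumes "ss > 0" "tt > 0" "ee = kk * xx"
  shows "- rr * (ee * (- (ss * ss * (vv * rr)))) + (1-rr) * ss * kk * (tt * ((xx/tt) * (ss * (qq * rr))) + 1/ss * (0 - 0))
         = ss * ss * rr * ee * (rr * vv + (1-rr) * qq)"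
  using assms by (simp add: field_simps)

lemma sqrt_n_sq: "sqrt n * sqrt n = n" using n_pos by simp

lemma EE_pos: "EE t > 0" by (simp add: EE_def)

lemma FL_deriv: assumes t: "t > 0" "uu t \<noteq> 1"
  shows "\<exists>d. (FL has_real_derivative d) (at t) \<and> d \<le> lam * gI n lam t"
proof -
  define v where "v = 1 - 1/uu t"
  define Q where "Q = v / W (uu t)"
  have t1: "t > -1" using t by simp
  have dE: "(EE has_real_derivative EE t * (- (sqrt n * sqrt n * (v * rho)))) (at t)"
    using EE_deriv[OF t1] by (simp add: sqrt_n_sq v_def abs_of_pos[OF n_pos])
  have dX: "(XX has_real_derivative XX t * (- (sqrt n * sqrt n * (v * rho)))) (at t)"
    using XX_deriv[OF t1] by (simp add: sqrt_n_sq v_def abs_of_pos[OF n_pos])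
  have dP: "(PP has_real_derivative (XX t / sqrt (2 * pi)) * (sqrt n * (Q * rho))) (at t)"
    using PP_deriv[OF t1 t(2)] phiW[OF t1] by (simp add: Q_def v_def)
  have dF: "(FL has_real_derivative
      - rho * (EE t * (- (sqrt n * sqrt n * (v * rho)))) + (1-rho) * sqrt n * exp KK * (sqrt (2 * pi) * ((XX t / sqrt (2 * pi)) * (sqrt n * (Q * rho))) - 2/(3 * sqrt n) * (XX t * (- (sqrt n * sqrt n * (v * rho)))))) (at t)"
    unfolding FL_def[abs_def] CC_def
    by (intro DERIV_add DERIV_cmult DERIV_diff dE dX dP)
  have eq: "- rho * (EE t * (- (sqrt n * sqrt n * (v * rho)))) + (1-rho) * sqrt n * exp KK * (sqrt (2 * pi) * ((XX t / sqrt (2 * pi)) * (sqrt n * (Q * rho))) - 2/(3 * sqrt n) * (XX t * (- (sqrt n * sqrt n * (v * rho)))))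
      = sqrt n * sqrt n * rho * EE t * (rho * v + (1-rho) * (Q + 2/3 * v))"
    by (rule algL) (use n_pos EE_XX in auto)
  have ineq: "Q + 2/3 * v \<le> 1" using W_ineqL[OF uu_pos'[OF t1] t(2)] by (simp add: Q_def v_def)
  have g: "lam * gI n lam t = sqrt n * sqrt n * rho * EE t * ((1 - rho) + rho * v)"
    using gI_eq[of t] t uu_pos'[OF t1] by (simp add: sqrt_n_sq v_def field_simps abs_of_pos[OF n_pos])
  have "sqrt n * sqrt n * rho * EE t * (rho * v + (1-rho) * (Q + 2/3 * v)) \<le> sqrt n * sqrt n * rho * EE t * ((1 - rho) + rho * v)"
  proof (rule mult_left_mono)
    show "rho * v + (1-rho) * (Q + 2/3 * v) \<le> (1 - rho) + rho * v"
      using mult_left_mono[OF ineq, of "1 - rho"] rho_le1 by simp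
    show "0 \<le> sqrt n * sqrt n * rho * EE t" using rho_pos EE_pos[of t] n_pos by simp
  qed
  then show ?thesis using dF eq g by (intro exI[of _ "sqrt n * sqrt n * rho * EE t * (rho * v + (1-rho) * (Q + 2/3 * v))"]) simp
qed

lemma YY_deriv1: assumes "uu t > 1"
  shows "(YY has_real_derivative XX t * (- (n * ((1 - 1/uu t) * rho)))) (at t)"
proof -
  have t1: "t > -1"
  proof (rule ccontr)
    assume "\<not> t > -1"
    then have "rho * (1 + t) \<le> 0" using rho_pos by (intro mult_nonneg_nonpos) auto
    then show False using assms by (simp add: uu_def)
  qed
  have op: "open {s. uu s > 1}" unfolding uu_def by (intro open_Collect_less continuous_intros)
  show ?thesis
    by (rule has_field_derivative_transform_within_open[OF XX_deriv[OF t1] op])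
       (use assms in \<open>auto simp: XX_def YY_def max_def\<close>)
qed

lemma YY_deriv2: assumes "uu t < 1"
  shows "(YY has_real_derivative 0) (at t)"
proof -
  have op: "open {s. uu s < 1}" unfolding uu_def by (intro open_Collect_less continuous_intros)
  show ?thesis
    by (rule has_field_derivative_transform_within_open[OF DERIV_const[of 1] op])
       (use assms in \<open>auto simp: YY_def max_def psi_def\<close>)
qed

lemma FU_deriv: assumes t: "t > 0" "uu t \<noteq> 1"
  shows "\<exists>d. (FU has_real_derivative d) (at t) \<and> d \<ge> lam * gI n lam t"
proof -
  define v where "v = 1 - 1/uu t"
  define Q where "Q = v / W (uu t)"
  have t1: "t > -1" using t by simp
  have up: "uu t > 0" using uu_pos'[OF t1] .
  have dE: "(EE has_real_derivative EE t * (- (sqrt n * sqrt n * (v * rho)))) (at t)"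
    using EE_deriv[OF t1] by (simp add: sqrt_n_sq v_def abs_of_pos[OF n_pos])
  have dP: "(PP has_real_derivative (XX t / sqrt (2 * pi)) * (sqrt n * (Q * rho))) (at t)"
    using PP_deriv[OF t1 t(2)] phiW[OF t1] by (simp add: Q_def v_def)
  have g: "lam * gI n lam t = sqrt n * sqrt n * rho * EE t * ((1 - rho) + rho * v)"
    using gI_eq[of t] t up by (simp add: sqrt_n_sq v_def field_simps abs_of_pos[OF n_pos])
  have pos: "0 \<le> sqrt n * sqrt n * rho * EE t" using rho_pos EE_pos[of t] n_pos by simp
  show ?thesis
  proof (cases "uu t > 1")
    case True
    have dY: "(YY has_real_derivative XX t * (- (sqrt n * sqrt n * (v * rho)))) (at t)"
      using YY_deriv1[OF True] by (simp add: sqrt_n_sq v_def abs_of_pos[OF n_pos])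
    have dF: "(FU has_real_derivative
        - rho * (EE t * (- (sqrt n * sqrt n * (v * rho)))) + (1 - rho) * sqrt n * exp KK * (sqrt (2 * pi) * ((XX t / sqrt (2 * pi)) * (sqrt n * (Q * rho))) + 1/sqrt n * (0 - XX t * (- (sqrt n * sqrt n * (v * rho)))))) (at t)"
      unfolding FU_def[abs_def] CC_def
      by (intro DERIV_add DERIV_cmult DERIV_diff dE dY dP DERIV_const)
    have eq: "- rho * (EE t * (- (sqrt n * sqrt n * (v * rho)))) + (1 - rho) * sqrt n * exp KK * (sqrt (2 * pi) * ((XX t / sqrt (2 * pi)) * (sqrt n * (Q * rho))) + 1/sqrt n * (0 - XX t * (- (sqrt n * sqrt n * (v * rho)))))
        = sqrt n * sqrt n * rho * EE t * (rho * v + (1 - rho) * (Q + v))"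
      by (rule algU1) (use n_pos EE_XX in auto)
    have Wp: "W (uu t) > 0" using W_pos[OF True] .
    have "1 \<le> Q * (1 + W (uu t))" using W_ineqU1[OF True] by (simp add: Q_def v_def)
    also have "Q * (1 + W (uu t)) = Q + v" using Wp by (simp add: Q_def field_simps)
    finally have ineq: "1 \<le> Q + v" .
    have "sqrt n * sqrt n * rho * EE t * ((1 - rho) + rho * v) \<le> sqrt n * sqrt n * rho * EE t * (rho * v + (1 - rho) * (Q + v))"
    proof (rule mult_left_mono[OF _ pos])
      show "(1 - rho) + rho * v \<le> rho * v + (1 - rho) * (Q + v)"
        using mult_left_mono[OF ineq, of "1 - rho"] rho_le1 by simp
    qed
    then show ?thesis using dF eq g by (intro exI[of _ "sqrt n * sqrt n * rho * EE t * (rho * v + (1 - rho) * (Q + v))"]) simp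
  next
    case False
    then have u1: "uu t < 1" using t(2) by simp
    have dY: "(YY has_real_derivative 0) (at t)" using YY_deriv2[OF u1] .
    have dF: "(FU has_real_derivative
        - rho * (EE t * (- (sqrt n * sqrt n * (v * rho)))) + (1 - rho) * sqrt n * exp KK * (sqrt (2 * pi) * ((XX t / sqrt (2 * pi)) * (sqrt n * (Q * rho))) + 1/sqrt n * (0 - 0))) (at t)"
      unfolding FU_def[abs_def] CC_def
      by (intro DERIV_add DERIV_cmult DERIV_diff dE dY dP DERIV_const)
    have eq: "- rho * (EE t * (- (sqrt n * sqrt n * (v * rho)))) + (1 - rho) * sqrt n * exp KK * (sqrt (2 * pi) * ((XX t / sqrt (2 * pi)) * (sqrt n * (Q * rho))) + 1/sqrt n * (0 - 0))
        = sqrt n * sqrt n * rho * EE t * (rho * v + (1 - rho) * Q)"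
      by (rule algU2) (use n_pos EE_XX in auto)
    have ineq: "1 \<le> Q" using W_ineqU2[OF up u1] by (simp add: Q_def v_def)
    have "sqrt n * sqrt n * rho * EE t * ((1 - rho) + rho * v) \<le> sqrt n * sqrt n * rho * EE t * (rho * v + (1 - rho) * Q)"
    proof (rule mult_left_mono[OF _ pos])
      show "(1 - rho) + rho * v \<le> rho * v + (1 - rho) * Q"
        using mult_left_mono[OF ineq, of "1 - rho"] rho_le1 by simp
    qed
    then show ?thesis using dF eq g by (intro exI[of _ "sqrt n * sqrt n * rho * EE t * (rho * v + (1 - rho) * Q)"]) simp
  qed
qed

lemma uu_isCont: "isCont uu t" unfolding uu_def by (intro continuous_intros)

lemma EE_isCont: "t > -1 \<Longrightarrow> isCont EE t" using EE_deriv DERIV_isCont by blast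
lemma XX_isCont: "t > -1 \<Longrightarrow> isCont XX t" using XX_deriv DERIV_isCont by blast

lemma PP_isCont: assumes "t > -1" shows "isCont PP t"
proof -
  have "isCont (\<lambda>t. W (uu t)) t" by (rule isCont_o2[OF uu_isCont W_isCont[OF uu_pos'[OF assms]]])
  then have "isCont (\<lambda>t. sqrt n * W (uu t)) t" by (intro continuous_intros)
  then show ?thesis unfolding PP_def by (rule isCont_o2[OF _ Phi_isCont])
qed

lemma YY_isCont: "isCont YY t"
proof -
  have "isCont (\<lambda>t. max (uu t) 1) t" by (intro continuous_intros uu_isCont)
  then have "isCont (\<lambda>t. psi (max (uu t) 1)) t" by (rule isCont_o2[OF _ psi_isCont]) simp
  then show ?thesis unfolding YY_def by (intro continuous_intros)
qed

lemma FL_cont: "continuous_on {0..} FL"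
proof (rule continuous_at_imp_continuous_on, rule ballI)
  fix t :: real assume "t \<in> {0..}"
  then have t: "t > -1" by simp
  show "isCont FL t" unfolding FL_def[abs_def]
    by (intro continuous_intros EE_isCont XX_isCont PP_isCont t)
qed

lemma FU_cont: "continuous_on {0..} FU"
proof (rule continuous_at_imp_continuous_on, rule ballI)
  fix t :: real assume "t \<in> {0..}"
  then have t: "t > -1" by simp
  show "isCont FU t" unfolding FU_def[abs_def]
    by (intro continuous_intros EE_isCont YY_isCont PP_isCont t)
qed

lemma uu_top: "filterlim uu at_top at_top"
proof -
  have "filterlim (\<lambda>t::real. 1 + t) at_top at_top" by real_asymp
  then show ?thesis unfolding uu_def[abs_def]
    by (rule filterlim_tendsto_pos_mult_at_top[OF tendsto_const rho_pos])
qed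

lemma npsi_top: "filterlim (\<lambda>t. n * psi (uu t)) at_top at_top"
  by (rule filterlim_tendsto_pos_mult_at_top[OF tendsto_const n_pos filterlim_compose[OF psi_at_top uu_top]])

lemma XX_lim: "(XX \<longlongrightarrow> 0) at_top"
proof -
  have "filterlim (\<lambda>t. - (n * psi (uu t))) at_bot at_top"
    by (rule filterlim_compose[OF filterlim_uminus_at_bot_at_top npsi_top])
  then have "((\<lambda>t. exp (- (n * psi (uu t)))) \<longlongrightarrow> 0) at_top"
    by (rule filterlim_compose[OF exp_at_bot])
  then show ?thesis by (simp add: XX_def[abs_def])
qed

lemma EE_lim: "(EE \<longlongrightarrow> 0) at_top"
proof -
  have "((\<lambda>t. exp KK * XX t) \<longlongrightarrow> exp KK * 0) at_top" by (intro tendsto_intros XX_lim)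
  then show ?thesis by (simp add: EE_XX[abs_def])
qed

lemma PP_lim: "(PP \<longlongrightarrow> 1) at_top"
proof -
  have w: "filterlim (\<lambda>t. W (uu t)) at_top at_top" by (rule filterlim_compose[OF W_at_top uu_top])
  have "filterlim (\<lambda>t. sqrt n * W (uu t)) at_top at_top"
    by (rule filterlim_tendsto_pos_mult_at_top[OF tendsto_const _ w]) (use n_pos in simp)
  then show ?thesis unfolding PP_def[abs_def] by (rule filterlim_compose[OF Phi_lim])
qed

lemma YY_lim: "(YY \<longlongrightarrow> 0) at_top"
proof -
  have "eventually (\<lambda>t. uu t \<ge> 1) at_top" using uu_top by (simp add: filterlim_at_top)
  then have "eventually (\<lambda>t. XX t = YY t) at_top" by eventually_elim (simp add: XX_def YY_def)
  then show ?thesis using XX_lim by (rule Lim_transform_eventually[rotated])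
qed

lemma FL_lim: "(FL \<longlongrightarrow> CC * sqrt (2 * pi)) at_top"
proof -
  have "(FL \<longlongrightarrow> - rho * 0 + CC * (sqrt (2 * pi) * 1 - 2 / (3 * sqrt n) * 0)) at_top"
    unfolding FL_def[abs_def] by (intro tendsto_intros EE_lim PP_lim XX_lim)
  then show ?thesis by simp
qed

lemma FU_lim: "(FU \<longlongrightarrow> CC * (sqrt (2 * pi) + 1 / sqrt n)) at_top"
proof -
  have "(FU \<longlongrightarrow> - rho * 0 + CC * (sqrt (2 * pi) * 1 + (1 / sqrt n) * (1 - 0))) at_top"
    unfolding FU_def[abs_def] by (intro tendsto_intros EE_lim PP_lim YY_lim)
  then show ?thesis by simp
qed

definition "aa = sqrt (2 * KK)"

lemma KK_nonneg: "KK \<ge> 0" using psi_nonneg[OF rho_pos] n_pos by (simp add: KK_def)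

lemma W_rho: "W rho = - sqrt (2 * psi rho)"
proof (cases "rho = 1")
  case True then show ?thesis by (simp add: W_def psi_def)
next
  case False then show ?thesis using rho_le1 by (simp add: W_def)
qed

lemma PP_0: "PP 0 = std_Phi (- aa)"
proof -
  have "sqrt n * W rho = - sqrt (2 * KK)"
    unfolding W_rho KK_def using n_pos by (simp add: real_sqrt_mult[symmetric] mult_ac)
  then show ?thesis by (simp add: PP_def uu_def aa_def)
qed

lemma EE_0: "EE 0 = 1" by (simp add: EE_def uu_def KK_def)
lemma XX_0: "XX 0 = exp (- KK)" by (simp add: XX_def uu_def KK_def)
lemma YY_0: "YY 0 = 1" using rho_le1 by (simp add: YY_def uu_def max_def psi_def)

lemma CC_XX0: "CC * exp (- KK) = (1 - rho) * sqrt n"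
  by (simp add: CC_def mult.assoc exp_add[symmetric])

lemma g_cont: "continuous_on {0..} (\<lambda>t. lam * gI n lam t)"
  using gI_cont[of n lam] by (intro continuous_intros) auto

lemma g_int: "set_integrable lborel {0..} (\<lambda>t. lam * gI n lam t)"
  using gI_int[OF lam n] by (rule set_integrable_mult_right)

lemma uu_ne: "t \<noteq> 1/rho - 1 \<Longrightarrow> uu t \<noteq> 1"
  using rho_pos by (auto simp: uu_def field_simps)

lemma lower_bound:
  "rho + CC * sqrt (2 * pi) * std_Phi aa + (1 - rho) * (2/3) \<le> lam * (LBINT t:{0..}. gI n lam t)"
proof -
  have "CC * sqrt (2 * pi) - FL 0 \<le> (LBINT t:{0..}. lam * gI n lam t)"
    by (rule ftc_ge[OF g_cont g_int FL_cont _ FL_lim, where c="1/rho - 1"]) (use FL_deriv uu_ne in blast)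
  moreover have "CC * sqrt (2 * pi) - FL 0 = rho + CC * sqrt (2 * pi) * std_Phi aa + (1 - rho) * (2/3)"
  proof -
    define A where "A = CC * sqrt (2 * pi)"
    define B where "B = CC * (2 / (3 * sqrt n) * exp (- KK))"
    have B: "B = (1 - rho) * (2/3)"
      using CC_XX0 n_pos unfolding B_def by (simp add: field_simps)
    have F0: "FL 0 = - rho + A * std_Phi (- aa) - B"
      unfolding FL_def EE_0 XX_0 PP_0 A_def B_def by (simp add: algebra_simps)
    have ph: "std_Phi (- aa) = 1 - std_Phi aa" using Phi_sym[of aa] by simp
    show ?thesis unfolding F0 B A_def[symmetric] ph by (simp add: algebra_simps)
  qed
  ultimately show ?thesis by simp
qed

lemma upper_bound:
  "lam * (LBINT t:{0..}. gI n lam t) \<le> rho + CC * sqrt (2 * pi) * std_Phi aa + (1 - rho) * exp KK"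
proof -
  have "(LBINT t:{0..}. lam * gI n lam t) \<le> CC * (sqrt (2 * pi) + 1 / sqrt n) - FU 0"
    by (rule ftc_le[OF g_cont g_int FU_cont _ FU_lim, where c="1/rho - 1"]) (use FU_deriv uu_ne in blast)
  moreover have "CC * (sqrt (2 * pi) + 1 / sqrt n) - FU 0 = rho + CC * sqrt (2 * pi) * std_Phi aa + (1 - rho) * exp KK"
  proof -
    define A where "A = CC * sqrt (2 * pi)"
    define B where "B = CC * (1 / sqrt n)"
    have B: "B = (1 - rho) * exp KK" using n_pos unfolding B_def by (simp add: CC_def)
    have F0: "FU 0 = - rho + A * std_Phi (- aa)"
      unfolding FU_def EE_0 YY_0 PP_0 A_def by (simp add: algebra_simps)
    have e: "CC * (sqrt (2 * pi) + 1 / sqrt n) = A + B" unfolding A_def B_def by (simp add: algebra_simps)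
    have ph: "std_Phi (- aa) = 1 - std_Phi aa" using Phi_sym[of aa] by simp
    show ?thesis unfolding F0 e B A_def[symmetric] ph by (simp add: algebra_simps)
  qed
  ultimately show ?thesis by simp
qed

lemma pos_int: "lam * (LBINT t:{0..}. gI n lam t) > 0"
proof -
  have "0 < rho" by (rule rho_pos)
  moreover have "0 \<le> CC * sqrt (2 * pi) * std_Phi aa"
  proof -
    have "std_Phi aa \<ge> 0" using Phi_mono[of "-aa" aa] Phi_sym[of aa] KK_nonneg
      by (simp add: aa_def)
    then show ?thesis using rho_le1 n_pos by (simp add: CC_def)
  qed
  moreover have "0 \<le> (1 - rho) * (2/3)" using rho_le1 by simp
  ultimately show ?thesis using lower_bound by linarith
qed

end


definition "RL lam n = rho lam n + CC lam n * sqrt (2 * pi) * std_Phi (aa lam n) + (1 - rho lam n) * (2/3)"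
definition "RU lam n = rho lam n + CC lam n * sqrt (2 * pi) * std_Phi (aa lam n) + (1 - rho lam n) * exp (KK lam n)"

lemma RL_pos: assumes "lam > 0" "n \<ge> lam" shows "RL lam n > 0"
proof -
  have "0 < rho lam n" by (rule rho_pos[OF assms])
  moreover have "0 \<le> CC lam n * sqrt (2 * pi) * std_Phi (aa lam n)"
  proof -
    have a0: "aa lam n \<ge> 0" using assms KK_nonneg[OF assms] by (simp add: aa_def)
    have "std_Phi (aa lam n) \<ge> 0" using Phi_mono[of "- aa lam n" "aa lam n"] Phi_sym[of "aa lam n"] a0
      by linarith
    moreover have "CC lam n \<ge> 0" using rho_le1[OF assms] n_pos[OF assms] assms by (simp add: CC_def)
    ultimately show ?thesis by simp
  qed
  moreover have "0 \<le> (1 - rho lam n) * (2/3)" using rho_le1[OF assms] by simp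
  ultimately show ?thesis unfolding RL_def by linarith
qed

lemma UB_eq: assumes lam: "lam > 0" and b: "b \<ge> 0"
  shows "UB b lam = inverse (RL lam (lam + b * sqrt lam))"
proof -
  define n where "n = lam + b * sqrt lam"
  have n: "n \<ge> lam" using b lam by (simp add: n_def)
  have np: "n > 0" using n lam by simp
  define r where "r = lam / n"
  have r: "r = rho lam n" using lam n by (simp add: r_def rho_def)
  have a: "sqrt (- 2 * n * (1 - r + ln r)) = aa lam n"
    using lam n unfolding r by (simp add: aa_def KK_def psi_def algebra_simps)
  have K: "aa lam n ^ 2 = 2 * KK lam n" using KK_nonneg[OF lam n] lam n by (simp add: aa_def)
  have phi: "std_phi (aa lam n) = exp (- KK lam n) / sqrt (2 * pi)"
    unfolding std_phi_def K by simp
  have g: "(n - lam) / sqrt n = (1 - r) * sqrt n"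
  proof -
    have ss: "sqrt n * sqrt n = n" using np by simp
    have sp: "sqrt n > 0" using np by simp
    have "(1 - r) * sqrt n = (n - lam) / (sqrt n * sqrt n) * sqrt n" unfolding ss using np by (simp add: r_def field_simps)
    also have "\<dots> = (n - lam) / sqrt n" using sp by (simp add: field_simps)
    finally show ?thesis by simp
  qed
  have cc: "CC lam n = (1 - r) * sqrt n * exp (KK lam n)" using lam n by (simp add: CC_def r)
  have alg: "\<And>s p P E. s > 0 \<Longrightarrow> p > 0 \<Longrightarrow> E > 0 \<Longrightarrow>
     (1 - r) * s * (P / (inverse E / p) + 2 / (3 * s)) = (1 - r) * s * E * p * P + (1 - r) * (2/3)"
    by (simp add: field_simps)
  have "(n - lam) / sqrt n * (std_Phi (aa lam n) / std_phi (aa lam n) + 2 / (3 * sqrt n))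
      = CC lam n * sqrt (2 * pi) * std_Phi (aa lam n) + (1 - r) * (2/3)"
    unfolding g phi cc exp_minus using np by (intro alg) auto
  then show ?thesis
    unfolding UB_def Let_def n_def[symmetric] r_def[symmetric] a RL_def r[symmetric] by simp
qed

lemma alpha_eq: "alpha_tilde b lam = min 1 (inverse (lam * (LBINT t:{0..}. gI (lam + b * sqrt lam) lam t)))"
  by (simp add: alpha_tilde_def erlangC_def gI_def[abs_def])

lemma alpha_le_UB: assumes lam: "lam > 0" and b: "b \<ge> 0"
  shows "alpha_tilde b lam \<le> UB b lam"
proof -
  define n where "n = lam + b * sqrt lam"
  have n: "n \<ge> lam" using b lam by (simp add: n_def)
  have "RL lam n \<le> lam * (LBINT t:{0..}. gI n lam t)"
    using lower_bound[OF lam n] by (simp add: RL_def)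
  then have "inverse (lam * (LBINT t:{0..}. gI n lam t)) \<le> inverse (RL lam n)"
    using RL_pos[OF lam n] by (intro le_imp_inverse_le) auto
  then show ?thesis unfolding alpha_eq UB_eq[OF lam b] n_def[symmetric] by simp
qed

lemma alpha_ge: assumes lam: "lam > 0" and b: "b \<ge> 0"
  shows "min 1 (inverse (RU lam (lam + b * sqrt lam))) \<le> alpha_tilde b lam"
proof -
  define n where "n = lam + b * sqrt lam"
  have n: "n \<ge> lam" using b lam by (simp add: n_def)
  have "lam * (LBINT t:{0..}. gI n lam t) \<le> RU lam n"
    using upper_bound[OF lam n] by (simp add: RU_def)
  then have "inverse (RU lam n) \<le> inverse (lam * (LBINT t:{0..}. gI n lam t))"
    using pos_int[OF lam n] by (intro le_imp_inverse_le) auto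
  then show ?thesis unfolding alpha_eq n_def[symmetric] by (simp add: min.coboundedI2)
qed

lemma alpha_mono: assumes lam: "lam > 0" and b: "0 \<le> b1" "b1 \<le> b2"
  shows "alpha_tilde b2 lam \<le> alpha_tilde b1 lam"
proof -
  define n1 where "n1 = lam + b1 * sqrt lam"
  define n2 where "n2 = lam + b2 * sqrt lam"
  have n1: "n1 \<ge> lam" using b lam by (simp add: n1_def)
  have n2: "n2 \<ge> lam" using b lam by (simp add: n2_def)
  have nn: "n1 \<le> n2" using b by (simp add: n1_def n2_def mult_right_mono lam less_imp_le)
  have "(LBINT t:{0..}. gI n1 lam t) \<le> (LBINT t:{0..}. gI n2 lam t)"
  proof (rule set_integral_mono[OF gI_int[OF lam n1] gI_int[OF lam n2]])
    fix t :: real assume "t \<in> {0..}"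
    then have t: "t \<ge> 0" by simp
    have "(1 + t) powr (n1 - 1) \<le> (1 + t) powr (n2 - 1)" using t nn by (intro powr_mono) auto
    then show "gI n1 lam t \<le> gI n2 lam t" unfolding gI_def using t
      by (intro mult_left_mono) auto
  qed
  then have "lam * (LBINT t:{0..}. gI n1 lam t) \<le> lam * (LBINT t:{0..}. gI n2 lam t)"
    using lam by simp
  then have "inverse (lam * (LBINT t:{0..}. gI n2 lam t)) \<le> inverse (lam * (LBINT t:{0..}. gI n1 lam t))"
    using pos_int[OF lam n1] by (intro le_imp_inverse_le) auto
  then show ?thesis unfolding alpha_eq n1_def[symmetric] n2_def[symmetric] by (simp add: min.coboundedI2 min.mono)
qed


definition "Hinv b = 1 + b * exp (b * b / 2) * sqrt (2 * pi) * std_Phi b"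

lemma RLU_lims: assumes b: "b > 0"
  shows "((\<lambda>lam. RL lam (lam + b * sqrt lam)) \<longlongrightarrow> Hinv b) at_top"
        "((\<lambda>lam. RU lam (lam + b * sqrt lam)) \<longlongrightarrow> Hinv b) at_top"
proof -
  define fr where "fr lam = lam / (lam + b * sqrt lam)" for lam :: real
  define fg where "fg lam = (1 - fr lam) * sqrt (lam + b * sqrt lam)" for lam :: real
  define fK where "fK lam = (lam + b * sqrt lam) * (fr lam - 1 - ln (fr lam))" for lam :: real
  have l1: "(fr \<longlongrightarrow> 1) at_top" unfolding fr_def[abs_def] using b by real_asymp
  have l2: "(fg \<longlongrightarrow> b) at_top" unfolding fg_def[abs_def] fr_def using b by real_asymp
  have l3: "(fK \<longlongrightarrow> b * b / 2) at_top" unfolding fK_def[abs_def] fr_def using b by real_asymp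
  have la: "((\<lambda>lam. sqrt (2 * fK lam)) \<longlongrightarrow> b) at_top"
  proof -
    have "((\<lambda>lam. sqrt (2 * fK lam)) \<longlongrightarrow> sqrt (2 * (b * b / 2))) at_top" by (intro tendsto_intros l3)
    then show ?thesis using b by simp
  qed
  have lP: "((\<lambda>lam. std_Phi (sqrt (2 * fK lam))) \<longlongrightarrow> std_Phi b) at_top"
    by (rule isCont_tendsto_compose[OF Phi_isCont la])
  have ev: "eventually (\<lambda>lam. RL lam (lam + b * sqrt lam) = fr lam + fg lam * exp (fK lam) * sqrt (2 * pi) * std_Phi (sqrt (2 * fK lam)) + (1 - fr lam) * (2/3)
     \<and> RU lam (lam + b * sqrt lam) = fr lam + fg lam * exp (fK lam) * sqrt (2 * pi) * std_Phi (sqrt (2 * fK lam)) + (1 - fr lam) * exp (fK lam)) at_top"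
  proof (rule eventually_mono[OF eventually_gt_at_top[of 0]])
    fix lam :: real assume lam: "lam > 0"
    have n: "lam + b * sqrt lam \<ge> lam" using b lam by simp
    show "RL lam (lam + b * sqrt lam) = fr lam + fg lam * exp (fK lam) * sqrt (2 * pi) * std_Phi (sqrt (2 * fK lam)) + (1 - fr lam) * (2/3)
     \<and> RU lam (lam + b * sqrt lam) = fr lam + fg lam * exp (fK lam) * sqrt (2 * pi) * std_Phi (sqrt (2 * fK lam)) + (1 - fr lam) * exp (fK lam)"
      using lam n unfolding RL_def RU_def
      by (simp add: rho_def CC_def aa_def KK_def psi_def fr_def fg_def fK_def)
  qed
  have "((\<lambda>lam. fr lam + fg lam * exp (fK lam) * sqrt (2 * pi) * std_Phi (sqrt (2 * fK lam)) + (1 - fr lam) * (2/3))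
     \<longlongrightarrow> 1 + b * exp (b * b / 2) * sqrt (2 * pi) * std_Phi b + (1 - 1) * (2/3)) at_top"
    by (intro tendsto_intros l1 l2 l3 lP)
  then have A: "((\<lambda>lam. fr lam + fg lam * exp (fK lam) * sqrt (2 * pi) * std_Phi (sqrt (2 * fK lam)) + (1 - fr lam) * (2/3))
     \<longlongrightarrow> Hinv b) at_top" by (simp add: Hinv_def)
  have "((\<lambda>lam. fr lam + fg lam * exp (fK lam) * sqrt (2 * pi) * std_Phi (sqrt (2 * fK lam)) + (1 - fr lam) * exp (fK lam))
     \<longlongrightarrow> 1 + b * exp (b * b / 2) * sqrt (2 * pi) * std_Phi b + (1 - 1) * exp (b * b / 2)) at_top"
    by (intro tendsto_intros l1 l2 l3 lP)
  then have B: "((\<lambda>lam. fr lam + fg lam * exp (fK lam) * sqrt (2 * pi) * std_Phi (sqrt (2 * fK lam)) + (1 - fr lam) * exp (fK lam))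
     \<longlongrightarrow> Hinv b) at_top" by (simp add: Hinv_def)
  show "((\<lambda>lam. RL lam (lam + b * sqrt lam)) \<longlongrightarrow> Hinv b) at_top"
    by (rule Lim_transform_eventually[OF A]) (rule eventually_mono[OF ev], simp)
  show "((\<lambda>lam. RU lam (lam + b * sqrt lam)) \<longlongrightarrow> Hinv b) at_top"
    by (rule Lim_transform_eventually[OF B]) (rule eventually_mono[OF ev], simp)
qed


lemma Phi_ge_half: "b \<ge> 0 \<Longrightarrow> std_Phi b \<ge> 1/2"
  using Phi_mono[of "-b" b] Phi_sym[of b] by linarith

lemma Hinv_cont: "continuous_on A Hinv"
  unfolding Hinv_def by (intro continuous_intros Phi_cont) auto

lemma Hinv_0: "Hinv 0 = 1" by (simp add: Hinv_def)

lemma Hinv_ge: assumes "b \<ge> 0" shows "Hinv b \<ge> 1 + b"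
proof -
  have "exp (b * b / 2) \<ge> 1" using assms by simp
  moreover have "sqrt (2 * pi) \<ge> 2"
  proof -
    have "sqrt (2 * pi) \<ge> sqrt 4" using pi_gt3 by (intro real_sqrt_le_mono) simp
    then show ?thesis by simp
  qed
  moreover have "std_Phi b \<ge> 1/2" using Phi_ge_half[OF assms] .
  ultimately have "exp (b * b / 2) * sqrt (2 * pi) * std_Phi b \<ge> 1 * 2 * (1/2)"
    by (intro mult_mono) auto
  then have "b * (exp (b * b / 2) * sqrt (2 * pi) * std_Phi b) \<ge> b * 1"
    using assms by (intro mult_left_mono) auto
  then show ?thesis by (simp add: Hinv_def mult.assoc)
qed

lemma Hinv_strict: assumes "0 \<le> x" "x < y" shows "Hinv x < Hinv y"
proof -
  have p: "std_Phi x \<le> std_Phi y" using assms by (intro Phi_mono) simp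
  have e: "exp (x * x / 2) \<le> exp (y * y / 2)" using assms by (simp add: mult_mono)
  have py: "std_Phi y > 0" using Phi_ge_half[of y] assms by simp
  have "x * exp (x * x / 2) * std_Phi x \<le> x * exp (y * y / 2) * std_Phi y"
    using assms p e Phi_ge_half[of x] by (intro mult_mono mult_left_mono) auto
  also have "\<dots> < y * exp (y * y / 2) * std_Phi y"
    using assms py by (intro mult_strict_right_mono) auto
  finally have "x * exp (x * x / 2) * std_Phi x * sqrt (2 * pi) < y * exp (y * y / 2) * std_Phi y * sqrt (2 * pi)"
    by (intro mult_strict_right_mono) auto
  then show ?thesis by (simp add: Hinv_def mult_ac)
qed

theorem lemma8:
  fixes c :: "real \<Rightarrow> real" and eps :: "real \<Rightarrow> real" and e :: real
    and betaF betaG :: "real \<Rightarrow> real"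
  assumes c_cont: "continuous_on {0..} c"
    and c_mono: "strict_mono_on {0..} c"
    and eps_range: "\<And>lam. lam > 0 \<Longrightarrow> 0 < eps lam \<and> eps lam \<le> 1"
    and eps_lim: "(eps \<longlongrightarrow> e) at_top"
    and e_range: "0 < e" "e < 1"
    and F_opt: "\<And>lam. lam > 0 \<Longrightarrow>
        betaF lam \<ge> 0 \<and> alpha_tilde (betaF lam) lam \<le> eps lam \<and>
        (\<forall>\<beta>\<ge>0. alpha_tilde \<beta> lam \<le> eps lam \<longrightarrow> c (betaF lam) \<le> c \<beta>)"
    and G_opt: "\<And>lam. lam > 0 \<Longrightarrow>
        betaG lam \<ge> 0 \<and> UB (betaG lam) lam \<le> eps lam \<and>
        (\<forall>\<beta>\<ge>0. UB \<beta> lam \<le> eps lam \<longrightarrow> c (betaG lam) \<le> c \<beta>)"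
  shows "(\<forall>lam>0. betaG lam \<ge> betaF lam) \<and>
         (\<exists>\<beta>s::real. (betaG \<longlongrightarrow> \<beta>s) at_top \<and> (betaF \<longlongrightarrow> \<beta>s) at_top)"
proof -
  have cmono: "\<And>x y. 0 \<le> x \<Longrightarrow> 0 \<le> y \<Longrightarrow> c x \<le> c y \<Longrightarrow> x \<le> y"
  proof -
    fix x y :: real assume xy: "0 \<le> x" "0 \<le> y" "c x \<le> c y"
    show "x \<le> y"
    proof (rule ccontr)
      assume "\<not> x \<le> y"
      then have "c y < c x" using c_mono xy unfolding strict_mono_on_def by auto
      then show False using xy by simp
    qed
  qed
  have part1: "\<And>lam. lam > 0 \<Longrightarrow> betaF lam \<le> betaG lam"
  proof -
    fix lam :: real assume lam: "lam > 0"
    have G: "betaG lam \<ge> 0" "UB (betaG lam) lam \<le> eps lam" using G_opt[OF lam] by auto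
    have "alpha_tilde (betaG lam) lam \<le> eps lam" using alpha_le_UB[OF lam G(1)] G(2) by linarith
    then have "c (betaF lam) \<le> c (betaG lam)" using F_opt[OF lam] G(1) by blast
    then show "betaF lam \<le> betaG lam" using cmono F_opt[OF lam] G(1) by blast
  qed
  obtain bs where bs: "bs \<ge> 0" "Hinv bs = 1/e"
  proof -
    have "Hinv 0 \<le> 1/e" using e_range by (simp add: Hinv_0)
    moreover have "1/e \<le> Hinv (1/e)" using Hinv_ge[of "1/e"] e_range by simp
    moreover have "0 \<le> 1/e" using e_range by simp
    ultimately obtain x where "x \<ge> 0" "x \<le> 1/e" "Hinv x = 1/e"
      using IVT'[of Hinv 0 "1/e" "1/e"] Hinv_cont by blast
    then show ?thesis using that by blast
  qed
  have upper: "eventually (\<lambda>lam. betaG lam < bs + d) at_top" if d: "d > 0" for d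
  proof -
    define b where "b = bs + d/2"
    have b: "b > 0" "b \<ge> 0" using bs d by (auto simp: b_def)
    have "Hinv b > 1/e" using Hinv_strict[of bs b] bs d by (simp add: b_def)
    moreover have Hp: "Hinv b > 0" using Hinv_ge[OF b(2)] b by simp
    ultimately have "inverse (Hinv b) < inverse (1/e)" using e_range
      by (intro less_imp_inverse_less) auto
    then have lt: "inverse (Hinv b) < e" by simp
    define m where "m = (inverse (Hinv b) + e) / 2"
    have m: "inverse (Hinv b) < m" "m < e" using lt by (auto simp: m_def)
    have lim: "((\<lambda>lam. inverse (RL lam (lam + b * sqrt lam))) \<longlongrightarrow> inverse (Hinv b)) at_top"
      using RLU_lims(1)[OF b(1)] Hp by (intro tendsto_intros) auto
    have ev1: "eventually (\<lambda>lam. inverse (RL lam (lam + b * sqrt lam)) < m) at_top"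
      by (rule order_tendstoD(2)[OF lim m(1)])
    have ev2: "eventually (\<lambda>lam. m < eps lam) at_top"
      by (rule order_tendstoD(1)[OF eps_lim m(2)])
    show ?thesis
      using ev1 ev2 eventually_gt_at_top[of 0]
    proof eventually_elim
      case (elim lam)
      then have lam: "lam > 0" by simp
      have "UB b lam \<le> eps lam" using elim UB_eq[OF lam b(2)] by simp
      then have "c (betaG lam) \<le> c b" using G_opt[OF lam] b by blast
      then have "betaG lam \<le> b" using cmono G_opt[OF lam] b by blast
      then show ?case using d by (simp add: b_def)
    qed
  qed
  have lower: "eventually (\<lambda>lam. bs - d < betaF lam) at_top" if d: "d > 0" for d
  proof (cases "bs - d/2 \<le> 0")
    case True
    show ?thesis
      using eventually_gt_at_top[of 0]
    proof eventually_elim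
      case (elim lam)
      then show ?case using F_opt[of lam] True d by fastforce
    qed
  next
    case False
    define b where "b = bs - d/2"
    have b: "b > 0" "b \<ge> 0" using False by (auto simp: b_def)
    have H1: "Hinv b \<ge> 1" using Hinv_ge[OF b(2)] b by simp
    have "Hinv b < 1/e" using Hinv_strict[of b bs] b d bs by (simp add: b_def)
    then have "inverse (1/e) < inverse (Hinv b)" using H1
      by (intro less_imp_inverse_less) auto
    then have gt: "e < inverse (Hinv b)" by simp
    have inv1: "inverse (Hinv b) \<le> 1" using H1 by (simp add: inverse_le_1_iff)
    define m where "m = (inverse (Hinv b) + e) / 2"
    have m: "m < inverse (Hinv b)" "e < m" using gt by (auto simp: m_def)
    have lim: "((\<lambda>lam. min 1 (inverse (RU lam (lam + b * sqrt lam)))) \<longlongrightarrow> min 1 (inverse (Hinv b))) at_top"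
      using RLU_lims(2)[OF b(1)] H1 by (intro tendsto_intros) auto
    then have lim': "((\<lambda>lam. min 1 (inverse (RU lam (lam + b * sqrt lam)))) \<longlongrightarrow> inverse (Hinv b)) at_top"
      using inv1 by (simp add: min_absorb2)
    have ev1: "eventually (\<lambda>lam. m < min 1 (inverse (RU lam (lam + b * sqrt lam)))) at_top"
      by (rule order_tendstoD(1)[OF lim' m(1)])
    have ev2: "eventually (\<lambda>lam. eps lam < m) at_top"
      by (rule order_tendstoD(2)[OF eps_lim m(2)])
    show ?thesis
      using ev1 ev2 eventually_gt_at_top[of 0]
    proof eventually_elim
      case (elim lam)
      then have lam: "lam > 0" by simp
      have ab: "alpha_tilde b lam > eps lam" using elim alpha_ge[OF lam b(2)] by linarith
      have "b \<le> betaF lam"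
      proof (rule ccontr)
        assume "\<not> b \<le> betaF lam"
        then have "alpha_tilde b lam \<le> alpha_tilde (betaF lam) lam"
          using F_opt[OF lam] by (intro alpha_mono[OF lam]) auto
        then show False using ab F_opt[OF lam] by linarith
      qed
      then show ?case using d by (simp add: b_def)
    qed
  qed
  have both: "eventually (\<lambda>lam. bs - d < betaF lam \<and> betaF lam \<le> betaG lam \<and> betaG lam < bs + d) at_top"
    if d: "d > 0" for d
    using lower[OF d] upper[OF d] eventually_gt_at_top[of 0]
    by eventually_elim (use part1 in auto)
  have "(betaG \<longlongrightarrow> bs) at_top"
  proof (rule tendstoI)
    fix d :: real assume d: "d > 0"
    show "eventually (\<lambda>lam. dist (betaG lam) bs < d) at_top"
      using both[OF d] by eventually_elim (auto simp: dist_real_def)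
  qed
  moreover have "(betaF \<longlongrightarrow> bs) at_top"
  proof (rule tendstoI)
    fix d :: real assume d: "d > 0"
    show "eventually (\<lambda>lam. dist (betaF lam) bs < d) at_top"
      using both[OF d] by eventually_elim (auto simp: dist_real_def)
  qed
  ultimately show ?thesis using part1 by auto
qed



end
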